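(* Let $i,j\in\mathbb{N}$ and $n\in\mathbb{N}_0$. If $d_j(n+1)=d_i(n)\pm1$, then $d_j(n+1)+d_i(n)=d_\ell(2n+1)$ for some $\ell\in\{3,i+1,j+1\}$.
   Context: For $i\in\mathbb{N}$ and $n\in\mathbb{N}_0$, $d_i(n)=2^{i-1}-\left|(n\bmod 2^i)-2^{i-1}\right|$. *)

theory Defs
  imports Main
begin

definition d :: "nat \<Rightarrow> nat \<Rightarrow> int" where
  "d i n = 2 ^ (i - 1) - \<bar>int (n mod 2 ^ i) - 2 ^ (i - 1)\<bar>"

end

theory Submission
  imports Defs
begin

lemma modeq: "x = M * q + (s::nat) \<Longrightarrow> s < M \<Longrightarrow> x mod M = s"
  by simp

lemma pow_dvd2: "(2::int)^i dvd 2 \<Longrightarrow> i \<le> 1"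
proof (rule ccontr)
  assume a: "(2::int)^i dvd 2" "\<not> i \<le> 1"
  then have "(2::int)^i \<le> 2" using zdvd_imp_le by fastforce
  moreover have "(2::int)^2 \<le> 2^i" using a(2) by (intro power_increasing) auto
  ultimately show False by simp
qed

theorem lemma12:
  fixes i j n :: nat
  assumes "i \<ge> 1" and "j \<ge> 1"
    and "d j (n + 1) = d i n + 1 \<or> d j (n + 1) = d i n - 1"
  shows "\<exists>l \<in> {3, i + 1, j + 1}. d j (n + 1) + d i n = d l (2 * n + 1)"
proof -
  define h :: int where "h = 2^(i-1)"
  define k :: int where "k = 2^(j-1)"
  define rn where "rn = n mod 2^i"
  define rn' where "rn' = (n+1) mod 2^j"
  define r where "r = int rn"
  define r' where "r' = int rn'"
  have Hi: "(2::nat)^i = 2 * 2^(i-1)" using assms(1) by (cases i) auto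
  have Kj: "(2::nat)^j = 2 * 2^(j-1)" using assms(2) by (cases j) auto
  have Hh: "(2::int)^i = 2*h" unfolding h_def using assms(1) by (cases i) auto
  have Kk: "(2::int)^j = 2*k" unfolding k_def using assms(2) by (cases j) auto
  have h1: "h \<ge> 1" unfolding h_def by simp
  have k1: "k \<ge> 1" unfolding k_def by simp
  have "rn < 2^i" unfolding rn_def by simp
  then have "int rn < int (2^i)" by (simp only: of_nat_less_iff)
  then have rlt: "r < 2*h" "r \<ge> 0" unfolding r_def using Hh by simp_all
  have "rn' < 2^j" unfolding rn'_def by simp
  then have "int rn' < int (2^j)" by (simp only: of_nat_less_iff)
  then have r'lt: "r' < 2*k" "r' \<ge> 0" unfolding r'_def using Kk by simp_all
  have a: "d i n = h - \<bar>r - h\<bar>" unfolding d_def h_def r_def rn_def by simp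
  have b: "d j (n+1) = k - \<bar>r' - k\<bar>" unfolding d_def k_def r'_def rn'_def by simp
  have A: "d (i+1) (2*n+1) = 2*h - \<bar>2*r+1 - 2*h\<bar>"
  proof -
    have "(2*n+1) mod 2^(i+1) = 2 * ((2*n+1) div 2 mod 2^i) + (2*n+1) mod 2"
      using mod_mult2_eq[of "2*n+1" 2 "2^i"] by (simp add: mult.commute)
    then have "(2*n+1) mod 2^(i+1) = 2*rn+1" unfolding rn_def by simp
    then show ?thesis unfolding d_def r_def using Hh by simp
  qed
  define q where "q = (n+1) div 2^j"
  have nq: "n+1 = 2^j * q + rn'" unfolding q_def rn'_def by simp
  have B1: "d (j+1) (2*n+1) = 2*k - \<bar>2*r'-1 - 2*k\<bar>" if "r' \<ge> 1"
  proof -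
    have rp: "rn' \<ge> 1" "rn' < 2^j" using that unfolding r'_def rn'_def by auto
    have "2*n+1 = 2^(j+1) * q + (2*rn'-1)" using nq rp by simp
    then have "(2*n+1) mod 2^(j+1) = 2*rn'-1" by (rule modeq) (use rp in simp)
    then show ?thesis unfolding d_def r'_def using Kk rp by (simp add: of_nat_diff)
  qed
  have B0: "d (j+1) (2*n+1) = 1" if "r' = 0"
  proof -
    have rp: "rn' = 0" using that unfolding r'_def by auto
    have q1: "q \<ge> 1" using nq rp by (cases q) auto
    have "2*n+1 = 2^(j+1) * (q-1) + (2^(j+1)-1)" using nq rp q1
      by (cases q) (auto simp: algebra_simps)
    then have "(2*n+1) mod 2^(j+1) = 2^(j+1)-1" by (rule modeq) simp
    then show ?thesis unfolding d_def using Kk Kj k_def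
      by (simp add: of_nat_diff)
  qed
  have ndec: "int n = 2^i * int (n div 2^i) + r"
  proof -
    have "int n = int (2^i * (n div 2^i) + n mod 2^i)" by simp
    then show ?thesis unfolding r_def rn_def by (simp only: of_nat_add of_nat_mult of_nat_power of_nat_numeral)
  qed
  have n1dec: "int n + 1 = 2^j * int q + r'"
  proof -
    have "int (n+1) = int (2^j * q + rn')" using nq by simp
    then show ?thesis unfolding r'_def by (simp only: of_nat_add of_nat_mult of_nat_power of_nat_numeral of_nat_1)
  qed
  have main: "False" if nA: "d (i+1) (2*n+1) \<noteq> d j (n + 1) + d i n"
      and nB: "d (j+1) (2*n+1) \<noteq> d j (n + 1) + d i n"
      and n3: "d 3 (2*n+1) \<noteq> d j (n + 1) + d i n"
  proof (cases "d j (n + 1) = d i n + 1")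
    case True
    have rh: "r \<ge> h" using nA A a b True by (cases "r \<ge> h") auto
    have r'1: "r' \<ge> 1" using True a b rh rlt r'lt by auto
    have r'k: "r' > k" using nB B1[OF r'1] a b True rh by (cases "r' > k") auto
    have dv1: "2^i dvd int n + (2*h - r)"
    proof -
      have "int n + (2*h - r) = 2^i * (int (n div 2^i) + 1)" using ndec Hh by (simp add: algebra_simps)
      then show ?thesis by simp
    qed
    have dv2: "2^j dvd int n + (2*h - r) + 2"
    proof -
      have "int n + (2*h - r) + 2 = 2^j * (int q + 1)" using n1dec True a b rh r'k Kk
        by (simp add: algebra_simps)
      then show ?thesis by simp
    qed
    show False
    proof (cases "i \<le> j")
      case True
      have "(2::int)^i dvd 2^j" using True by (simp add: le_imp_power_dvd)
      then have "2^i dvd int n + (2*h - r) + 2" using dv2 dvd_trans by blast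
      then have "(2::int)^i dvd 2" using dv1 by (simp add: dvd_add_right_iff)
      then have i1: "i = 1" using pow_dvd2 assms(1) by fastforce
      then have "h = 1" unfolding h_def by simp
      then have ab: "r = 1" "d i n = 1" "d j (n+1) = 2" using rh rlt a \<open>d j (n + 1) = d i n + 1\<close> by auto
      have "k > 2" using ab b r'k by auto
      have j3: "j \<ge> 3"
      proof (rule ccontr)
        assume "\<not> 3 \<le> j"
        then have "j - 1 \<le> 1" by simp
        then have "(2::int)^(j-1) \<le> 2^1" by (rule power_increasing) simp
        then show False using \<open>k > 2\<close> unfolding k_def by simp
      qed
      have "(2::int)^3 dvd 2^j" by (rule le_imp_power_dvd[OF j3])
      then have "(2::int)^3 dvd int n + (2*h - r) + 2" using dv2 by (rule dvd_trans)
      then have "8 dvd int n + 3" using \<open>h = 1\<close> ab by (simp add: add.commute)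
      then have "(2*n+1) mod 8 = 3" by presburger
      then have "d 3 (2*n+1) = 3" unfolding d_def by simp
      then show False using n3 ab by simp
    next
      case False
      have "(2::int)^j dvd 2^i" using False by (simp add: le_imp_power_dvd)
      then have "2^j dvd int n + (2*h - r)" using dv1 dvd_trans by blast
      then have "(2::int)^j dvd 2" using dv2 by (simp add: dvd_add_right_iff)
      then have "j = 1" using pow_dvd2 assms(2) by fastforce
      then have "k = 1" unfolding k_def by simp
      then show False using r'k r'lt by auto
    qed
  next
    case False
    then have F: "d j (n + 1) = d i n - 1" using assms(3) by simp
    have rh: "r < h" using nA A a b F by (cases "r < h") auto
    have r'1: "r' \<ge> 1"
    proof (rule ccontr)
      assume "\<not> r' \<ge> 1"
      then have r0: "r' = 0" using r'lt by simp
      then have b0: "d j (n+1) = 0" using b k1 by simp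
      then have "d i n = 1" using F by simp
      then show False using nB B0[OF r0] b0 by simp
    qed
    have r'k: "r' \<le> k" using nB B1[OF r'1] a b F rh by (cases "r' \<le> k") auto
    have dv1: "2^i dvd int n - r"
      using ndec by simp
    have dv2: "2^j dvd int n - r + 2"
    proof -
      have "int n - r + 2 = 2^j * int q" using n1dec F a b rh r'k r'1 rlt
        by (simp add: algebra_simps)
      then show ?thesis by simp
    qed
    show False
    proof (cases "i \<le> j")
      case True
      have "(2::int)^i dvd 2^j" using True by (simp add: le_imp_power_dvd)
      then have "2^i dvd int n - r + 2" using dv2 dvd_trans by blast
      then have "(2::int)^i dvd 2" using dv1 by (simp add: dvd_add_right_iff)
      then have i1: "i = 1" using pow_dvd2 assms(1) by fastforce
      then have "h = 1" unfolding h_def by simp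
      then show False using rh rlt a b F r'1 r'k by auto
    next
      case False
      have "(2::int)^j dvd 2^i" using False by (simp add: le_imp_power_dvd)
      then have "2^j dvd int n - r" using dv1 dvd_trans by blast
      then have "(2::int)^j dvd 2" using dv2 by (simp add: dvd_add_right_iff)
      then have "j = 1" using pow_dvd2 assms(2) by fastforce
      then have "k = 1" unfolding k_def by simp
      then have ab: "r = 2" "d i n = 2" "d j (n+1) = 1" using r'1 r'k a b F rh rlt by auto
      have "h > 2" using ab rh by auto
      have i3: "i \<ge> 3"
      proof (rule ccontr)
        assume "\<not> 3 \<le> i"
        then have "i - 1 \<le> 1" by simp
        then have "(2::int)^(i-1) \<le> 2^1" by (rule power_increasing) simp
        then show False using \<open>h > 2\<close> unfolding h_def by simp
      qed
      have "(2::int)^3 dvd 2^i" by (rule le_imp_power_dvd[OF i3])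
      then have "(2::int)^3 dvd int n - r" using dv1 by (rule dvd_trans)
      then have "8 dvd int n - 2" using ab by simp
      then have "(2*n+1) mod 8 = 5" by presburger
      then have "d 3 (2*n+1) = 3" unfolding d_def by simp
      then show False using n3 ab by simp
    qed
  qed
  show ?thesis
  proof (rule ccontr)
    assume "\<not> ?thesis"
    then have "d (i+1) (2*n+1) \<noteq> d j (n + 1) + d i n" "d (j+1) (2*n+1) \<noteq> d j (n + 1) + d i n"
      "d 3 (2*n+1) \<noteq> d j (n + 1) + d i n" by auto
    then show False by (rule main)
  qed
qed

end
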